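(* Let $A$ be a real $2\times 2$ matrix and $B$ a real $1\times 2$ matrix, and let $\mathrm{NT}=\{\vec{x}\in\mathbb{R}^2 : BA^k\vec{x}>0 \text{ for all integers } k\ge 0\}$. Suppose $A$ has a positive eigenvalue and has an eigenvector $\vec{\alpha}$ with $B\vec{\alpha}=0$. If $\vec{\xi}\in\mathbb{R}^2$ satisfies $B\vec{\xi}>0$ and $BA\vec{\xi}>0$, then $\mathrm{NT}=\{\vec{x}\in\mathbb{R}^2: B\vec{x}>0\}$.
   Context: $\mathrm{NT}$ is the non-termination set of the loop "while $(B\vec{x}>0)$ $\{\vec{x}:=A\vec{x}\}$". *)

theory Defs
  imports "HOL-Analysis.Analysis"
begin

primrec matpow :: "real^'n^'n \<Rightarrow> nat \<Rightarrow> real^'n^'n" where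
  "matpow A 0 = mat 1"
| "matpow A (Suc k) = A ** matpow A k"

definition is_eigenvalue :: "real^'n^'n \<Rightarrow> real \<Rightarrow> bool" where
  "is_eigenvalue A l \<longleftrightarrow> (\<exists>v. v \<noteq> 0 \<and> A *v v = l *\<^sub>R v)"

definition is_eigenvector :: "real^'n^'n \<Rightarrow> real^'n \<Rightarrow> bool" where
  "is_eigenvector A v \<longleftrightarrow> v \<noteq> 0 \<and> (\<exists>l. A *v v = l *\<^sub>R v)"

text \<open>Non-termination set of  while (B x > 0) { x := A x }, B a 1x2 matrix.\<close>
definition NT :: "real^2^2 \<Rightarrow> real^2^1 \<Rightarrow> (real^2) set" where
  "NT A B = {x. \<forall>k::nat. ((B ** matpow A k) *v x) $ 1 > 0}"

end

theory Submission
  imports Defs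
begin

lemma mv2: "((M::real^2^'m) *v y) $ i = M$i$1 * y$1 + M$i$2 * y$2"
  by (simp add: matrix_vector_mult_def sum_2)

lemma vec2_eq: "(v::real^2) = w \<longleftrightarrow> v$1 = w$1 \<and> v$2 = w$2"
  by (metis exhaust_2 vec_eq_iff)

theorem lemma4:
  fixes A :: "real^2^2" and B :: "real^2^1" and \<alpha> \<xi> :: "real^2"
  assumes "\<exists>l>0. is_eigenvalue A l"
    and "is_eigenvector A \<alpha>" and "B *v \<alpha> = 0"
    and "(B *v \<xi>) $ 1 > 0" and "((B ** A) *v \<xi>) $ 1 > 0"
  shows "NT A B = {x. (B *v x) $ 1 > 0}"
proof -
  define f where "f y = (B *v y) $ 1" for y
  obtain \<mu> where amu: "A *v \<alpha> = \<mu> *\<^sub>R \<alpha>" and an: "\<alpha> \<noteq> 0"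
    using assms(2) unfolding is_eigenvector_def by blast
  have fa: "f \<alpha> = 0" using assms(3) by (simp add: f_def)
  have fx: "f \<xi> > 0" using assms(4) by (simp add: f_def)
  define c where "c = f (A *v \<xi>) / f \<xi>"
  have cpos: "c > 0" using assms(5) fx
    by (simp add: c_def f_def matrix_vector_mul_assoc[symmetric])
  define h1 where "h1 = B$1$1 * A$1$1 + B$1$2 * A$2$1 - c * B$1$1"
  define h2 where "h2 = B$1$1 * A$1$2 + B$1$2 * A$2$2 - c * B$1$2"
  have gen: "f (A *v y) - c * f y = h1 * y$1 + h2 * y$2" for y
    by (simp add: f_def mv2 h1_def h2_def algebra_simps)
  have a1: "A$1$1 * \<alpha>$1 + A$1$2 * \<alpha>$2 = \<mu> * \<alpha>$1"
    using arg_cong[OF amu, of "\<lambda>v. v$1"] by (simp add: mv2)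
  have a2: "A$2$1 * \<alpha>$1 + A$2$2 * \<alpha>$2 = \<mu> * \<alpha>$2"
    using arg_cong[OF amu, of "\<lambda>v. v$2"] by (simp add: mv2)
  have fa': "B$1$1 * \<alpha>$1 + B$1$2 * \<alpha>$2 = 0" using fa by (simp add: f_def mv2)
  have fx': "B$1$1 * \<xi>$1 + B$1$2 * \<xi>$2 > 0" using fx by (simp add: f_def mv2)
  have "f (A *v \<alpha>) = 0" using amu fa by (simp add: f_def mv2 algebra_simps)
  hence ha: "h1 * \<alpha>$1 + h2 * \<alpha>$2 = 0" using gen[of \<alpha>] fa by simp
  have "f (A *v \<xi>) - c * f \<xi> = 0" using fx by (simp add: c_def)
  hence hx: "h1 * \<xi>$1 + h2 * \<xi>$2 = 0" using gen[of \<xi>] by simp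
  have an': "\<alpha>$1 \<noteq> 0 \<or> \<alpha>$2 \<noteq> 0" using an by (simp add: vec2_eq)
  have det: "\<alpha>$1 * \<xi>$2 - \<alpha>$2 * \<xi>$1 \<noteq> 0"
  proof
    assume d: "\<alpha>$1 * \<xi>$2 - \<alpha>$2 * \<xi>$1 = 0"
    have e1: "(B$1$1 * \<xi>$1 + B$1$2 * \<xi>$2) * \<alpha>$1 = \<xi>$1 * (B$1$1 * \<alpha>$1 + B$1$2 * \<alpha>$2)"
      using d by (simp add: algebra_simps)
    have e2: "(B$1$1 * \<xi>$1 + B$1$2 * \<xi>$2) * \<alpha>$2 = \<xi>$2 * (B$1$1 * \<alpha>$1 + B$1$2 * \<alpha>$2)"
      using d by (simp add: algebra_simps)
    show False using e1 e2 fa' fx' an' by auto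
  qed
  have "h1 * (\<alpha>$1 * \<xi>$2 - \<alpha>$2 * \<xi>$1) = 0"
  proof -
    have "h1 * (\<alpha>$1 * \<xi>$2 - \<alpha>$2 * \<xi>$1) = (h1 * \<alpha>$1 + h2 * \<alpha>$2) * \<xi>$2 - (h1 * \<xi>$1 + h2 * \<xi>$2) * \<alpha>$2"
      by (simp add: algebra_simps)
    thus ?thesis using ha hx by simp
  qed
  hence h1z: "h1 = 0" using det by simp
  have "h2 * (\<alpha>$1 * \<xi>$2 - \<alpha>$2 * \<xi>$1) = 0"
  proof -
    have "h2 * (\<alpha>$1 * \<xi>$2 - \<alpha>$2 * \<xi>$1) = (h1 * \<xi>$1 + h2 * \<xi>$2) * \<alpha>$1 - (h1 * \<alpha>$1 + h2 * \<alpha>$2) * \<xi>$1"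
      by (simp add: algebra_simps)
    thus ?thesis using ha hx by simp
  qed
  hence h2z: "h2 = 0" using det by simp
  have key: "f (A *v y) = c * f y" for y using gen[of y] h1z h2z by simp
  have pw: "f (matpow A k *v x) = c ^ k * f x" for k x
  proof (induction k)
    case 0 thus ?case by simp
  next
    case (Suc k)
    have "f (matpow A (Suc k) *v x) = f (A *v (matpow A k *v x))"
      by (simp add: matrix_vector_mul_assoc)
    also have "\<dots> = c * f (matpow A k *v x)" by (rule key)
    finally show ?case using Suc by simp
  qed
  have pw2: "((B ** matpow A k) *v x) $ 1 = c ^ k * f x" for k x
    using pw[of k x] by (simp add: f_def matrix_vector_mul_assoc[symmetric])
  show ?thesis
  proof (intro set_eqI iffI)
    fix x assume "x \<in> NT A B"
    hence "((B ** matpow A 0) *v x) $ 1 > 0" unfolding NT_def by blast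
    thus "x \<in> {x. (B *v x) $ 1 > 0}" by simp
  next
    fix x assume "x \<in> {x. (B *v x) $ 1 > 0}"
    hence "f x > 0" by (simp add: f_def)
    thus "x \<in> NT A B" unfolding NT_def using pw2 cpos by simp
  qed
qed

end
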